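(* Let $(N_r)_{r\in\mathbb{Z}}$ be the Narayana sequence and for $1\le b\le 4$ and $r\ge 0$ let $S_{N,r}^{(4,b)}=\sum_{k=0}^{r}N_{4k+b}$. Then for every $r\ge 3$, $$S_{N,r}^{(4,b)}=5S_{N,r-1}^{(4,b)}-2S_{N,r-2}^{(4,b)}+S_{N,r-3}^{(4,b)}+c_b,$$ where $c_1=-1$, $c_2=c_4=1$ and $c_3=2$.
   Context: The Narayana sequence $(N_r)_{r\in\mathbb{Z}}$ is defined by $N_0=0$, $N_1=N_2=1$ and $N_r=N_{r-1}+N_{r-3}$ for all integers $r$. *)

theory Defs
  imports Main
begin

text \<open>Narayana sequence on nonnegative indices: N 0 = 0, N 1 = N 2 = 1,
  N r = N (r-1) + N (r-3).  Only nonnegative indices occur in the theorem.\<close>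
fun narayana :: "nat \<Rightarrow> int" where
  "narayana 0 = 0"
| "narayana (Suc 0) = 1"
| "narayana (Suc (Suc 0)) = 1"
| "narayana (Suc (Suc (Suc n))) = narayana (Suc (Suc n)) + narayana n"

definition S4 :: "nat \<Rightarrow> nat \<Rightarrow> int" where
  "S4 b r = (\<Sum>k=0..r. narayana (4 * k + b))"

definition c4 :: "nat \<Rightarrow> int" where
  "c4 b = (if b = 1 then -1 else if b = 3 then 2 else 1)"

end

theory Submission
  imports Defs
begin

lemma nrec: "narayana (n+12) = 5*narayana(n+8) - 2*narayana(n+4) + narayana n"
  by (simp add: eval_nat_numeral)

lemma S4_Suc: "S4 b (Suc r) = S4 b r + narayana (4 * Suc r + b)"
  by (simp add: S4_def)

lemma main:
  assumes "1 \<le> b" and "b \<le> 4"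
  shows "S4 b (m+3) = 5 * S4 b (m+2) - 2 * S4 b (m+1) + S4 b m + c4 b"
proof (induction m)
  case 0
  have "b = 1 \<or> b = 2 \<or> b = 3 \<or> b = 4" using assms by auto
  then show ?case
    by (auto simp: S4_def c4_def eval_nat_numeral)
next
  case (Suc m)
  have r: "narayana (4 * (m+4) + b) = 5*narayana(4*(m+3)+b) - 2*narayana(4*(m+2)+b) + narayana (4*(m+1)+b)"
    using nrec[of "4*(m+1)+b"] by (simp add: algebra_simps)
  have e: "S4 b (Suc m + 3) = S4 b (m+3) + narayana (4*(m+4)+b)"
    "S4 b (Suc m + 2) = S4 b (m+2) + narayana (4*(m+3)+b)"
    "S4 b (Suc m + 1) = S4 b (m+1) + narayana (4*(m+2)+b)"
    "S4 b (Suc m) = S4 b m + narayana (4*(m+1)+b)"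
    using S4_Suc[of b "m+3"] S4_Suc[of b "m+2"] S4_Suc[of b "m+1"] S4_Suc[of b m]
    by (simp_all add: algebra_simps)
  show ?case unfolding e using Suc.IH r by (simp add: algebra_simps)
qed

theorem theorem7:
  fixes b r :: nat
  assumes "1 \<le> b" and "b \<le> 4" and "3 \<le> r"
  shows "S4 b r = 5 * S4 b (r - 1) - 2 * S4 b (r - 2) + S4 b (r - 3) + c4 b"
proof -
  obtain m where m: "r = m + 3" using assms(3) by (metis add.commute le_Suc_ex)
  have "r - 1 = m+2" "r - 2 = m+1" "r - 3 = m" using m by auto
  then show ?thesis using main[OF assms(1,2), of m] m by simp
qed

end
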